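(* In the proof-of-sequential-work described in the context, if an adversary $\mathcal{A}$ knows the factorization $\Delta=pq$, then for any arbitrary positive integer $\rho'$ and commitment $\phi'=p_0^{\rho'}\bmod\Delta$ (computed without labelling $G_n$), $\mathcal{A}$ can produce proofs $\pi$ with $\mathsf{Verify}(x,\phi',\gamma,\pi)=1$.
   Context: Graph $G_n$: nodes are binary strings of length at most $n$, $N=2^{n+1}-1$; edges $(v\|0,v),(v\|1,v)$ for $v\in\{0,1\}^{<n}$ and $(w\|0,u)$ for every leaf $u=w\|1\|w'$; $\mathsf{parent}(v)=\{u:(u,v)\text{ an edge}\}$. Public parameters: random oracle $\mathsf{H}:\{0,1\}^*\to\mathbb{P}_\lambda$ (first $2^\lambda$ primes), $\mathsf{H}_x(\cdot)=\mathsf{H}(x\|\cdot)$, $\Delta=pq$ a product of two safe primes, $t$ challenges. $p_0=\mathsf{H}_x(0^n)$. Honest labels are $p_i=\mathsf{H}_x(i\|p_{k_1}\|\cdots\|p_{k_j})$ with $\mathsf{parent}(i)=\{k_1,\dots,k_j\}$. Verification: for random challenge leaves $\gamma_1,\dots,\gamma_t$, a proof is $\pi_i=(\sigma_i,\tau_i)$ where $\sigma_i$ are labels of $\mathsf{parent}(\gamma_i)$ and $\tau_i\in(\mathbb{Z}/\Delta\mathbb{Z})^\times$; the verifier computes $p_{\gamma_i}=\mathsf{H}_x(\gamma_i\|\sigma_i)$ and accepts the commitment $\phi'$ iff $\phi'=\tau_i^{p_{\gamma_i}}\bmod\Delta$ for all $i$. *)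

theory Defs
  imports "HOL-Number_Theory.Number_Theory"
begin

definition nodes :: "nat \<Rightarrow> bool list set" where
  "nodes n = {v. length v \<le> n}"

definition leaves :: "nat \<Rightarrow> bool list set" where
  "leaves n = {v. length v = n}"

definition edges :: "nat \<Rightarrow> (bool list \<times> bool list) set" where
  "edges n = {(v @ [b], v) | v b. length v < n}
           \<union> {(w @ [False], u) | w u. length u = n \<and> (\<exists>w'. u = w @ [True] @ w')}"

definition parent :: "nat \<Rightarrow> bool list \<Rightarrow> bool list set" where
  "parent n v = {u. (u, v) \<in> edges n}"

text \<open>P_lambda: the first 2^lambda primes.\<close>
definition primes_lambda :: "nat \<Rightarrow> nat set" where
  "primes_lambda lam = {r. prime r \<and> card {s. prime s \<and> s < r} < 2 ^ lam}"

definition safe_prime :: "nat \<Rightarrow> bool" where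
  "safe_prime r \<longleftrightarrow> prime r \<and> prime ((r - 1) div 2) \<and> odd r"

text \<open>The random hashfn, modelled as an arbitrary function: H x v \<sigma> stands for
  H(x || v || \<sigma>_1 || ... || \<sigma>_j), i.e. H_x(v || \<sigma>).\<close>
type_synonym hashfn = "bool list \<Rightarrow> bool list \<Rightarrow> nat list \<Rightarrow> nat"

definition verify1 :: "hashfn \<Rightarrow> nat \<Rightarrow> bool list \<Rightarrow> nat \<Rightarrow> bool list \<Rightarrow> nat list \<Rightarrow> nat \<Rightarrow> bool" where
  "verify1 H \<Delta> x \<phi> \<gamma> \<sigma> \<tau> \<longleftrightarrow>
     \<tau> < \<Delta> \<and> coprime \<tau> \<Delta> \<and> \<phi> = \<tau> ^ (H x \<gamma> \<sigma>) mod \<Delta>"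

definition Verify :: "hashfn \<Rightarrow> nat \<Rightarrow> bool list \<Rightarrow> nat \<Rightarrow> bool list list
                      \<Rightarrow> (nat list \<times> nat) list \<Rightarrow> bool" where
  "Verify H \<Delta> x \<phi> \<gamma>s \<pi>s \<longleftrightarrow> length \<pi>s = length \<gamma>s \<and>
     (\<forall>i < length \<gamma>s. verify1 H \<Delta> x \<phi> (\<gamma>s ! i) (fst (\<pi>s ! i)) (snd (\<pi>s ! i)))"

end

theory Submission
  imports Defs
begin

lemma key:
  fixes g e d r m :: nat
  assumes "coprime g m" "[e*d = 1] (mod totient m)" "e*d > 0"
  shows "((g^r mod m)^d mod m)^e mod m = g^r mod m"
proof -
  obtain k where k: "e*d = 1 + k * totient m" using assms(2,3) cong_to_1'_nat by auto
  have "((g^r mod m)^d mod m)^e mod m = g^(r*(e*d)) mod m"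
    by (simp add: power_mod power_mult[symmetric] mult.commute mult.left_commute)
  also have "g^(r*(e*d)) = g^r * (g ^ totient m)^(r*k)"
  proof -
    have "r*(e*d) = r*(1 + k * totient m)" by (simp only: k)
    also have "\<dots> = r + totient m * (r*k)" by (simp add: algebra_simps)
    finally have "r*(e*d) = r + totient m * (r*k)" .
    thus ?thesis by (simp add: power_add power_mult)
  qed
  also have "[g^r * (g ^ totient m)^(r*k) = g^r * 1^(r*k)] (mod m)"
    by (intro cong_mult cong_pow euler_theorem assms(1) cong_refl)
  hence "g^r * (g ^ totient m)^(r*k) mod m = g^r mod m" by (simp add: cong_def)
  finally show ?thesis .
qed

theorem lemma2:
  fixes H :: hashfn and p q n lam \<rho>' :: nat and x :: "bool list"
    and \<gamma>s :: "bool list list" and \<sigma>s :: "nat list list"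
  assumes "safe_prime p" and "safe_prime q" and "p \<noteq> q"
    and H_range: "\<And>a v s. H a v s \<in> primes_lambda lam"
    and H_good: "\<And>a v s. coprime (H a v s) (p * q * ((p - 1) * (q - 1)))"
    and "\<rho>' > 0"
    and \<gamma>_leaves: "\<forall>\<gamma> \<in> set \<gamma>s. \<gamma> \<in> leaves n"
    and \<sigma>_len: "length \<sigma>s = length \<gamma>s"
    and \<sigma>_form: "\<forall>i < length \<gamma>s. length (\<sigma>s ! i) = card (parent n (\<gamma>s ! i))
                      \<and> set (\<sigma>s ! i) \<subseteq> primes_lambda lam"
  shows "\<exists>ds :: nat list. length ds = length \<gamma>s \<and>
           (\<forall>i < length \<gamma>s. [H x (\<gamma>s ! i) (\<sigma>s ! i) * ds ! i = 1] (mod ((p - 1) * (q - 1)))) \<and>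
           (let \<phi>' = H x (replicate n False) [] ^ \<rho>' mod (p * q) in
            Verify H (p * q) x \<phi>' \<gamma>s
              (map (\<lambda>i. (\<sigma>s ! i, \<phi>' ^ (ds ! i) mod (p * q))) [0..<length \<gamma>s]))"
proof -
  have pp: "prime p" "prime q" using assms(1,2) unfolding safe_prime_def by auto
  have p2: "p \<noteq> 2" "q \<noteq> 2" using assms(1,2) unfolding safe_prime_def by auto
  define \<phi> where "\<phi> = (p - 1) * (q - 1)"
  have tot: "totient (p*q) = \<phi>"
    unfolding \<phi>_def using pp assms(3)
    by (simp add: totient_mult_coprime primes_coprime totient_prime)
  have phi1: "\<phi> \<noteq> 1" using p2 unfolding \<phi>_def by auto
  have pos: "p*q > 1" using pp prime_gt_1_nat[of p] prime_gt_1_nat[of q] by (simp add: one_less_mult)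
  let ?e = "\<lambda>i. H x (\<gamma>s ! i) (\<sigma>s ! i)"
  have ex: "\<exists>d. [?e i * d = 1] (mod \<phi>)" for i
  proof -
    have "coprime (?e i) \<phi>" using H_good unfolding \<phi>_def by simp
    thus ?thesis using cong_solve_coprime_nat by auto
  qed
  define ds where "ds = map (\<lambda>i. SOME d. [?e i * d = 1] (mod \<phi>)) [0..<length \<gamma>s]"
  have dsc: "[?e i * ds ! i = 1] (mod \<phi>)" if "i < length \<gamma>s" for i
    using that someI_ex[OF ex[of i]] unfolding ds_def by simp
  have epos: "?e i * ds ! i > 0" if "i < length \<gamma>s" for i
  proof (rule ccontr)
    assume "\<not> ?thesis"
    hence "?e i * ds ! i = 0" by simp
    with dsc[OF that] have "[0 = 1] (mod \<phi>)" by simp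
    thus False using phi1 by (simp add: cong_def)
  qed
  define g where "g = H x (replicate n False) []"
  have gc: "coprime g (p*q)" using H_good[of x "replicate n False" "[]"] unfolding g_def
    by simp
  have "Verify H (p * q) x (g ^ \<rho>' mod (p * q)) \<gamma>s
              (map (\<lambda>i. (\<sigma>s ! i, (g ^ \<rho>' mod (p * q)) ^ (ds ! i) mod (p * q))) [0..<length \<gamma>s])"
    (is "Verify _ _ _ _ _ (map (\<lambda>i. (_, ?T i)) _)")
  proof -
    have per: "?T i < p * q \<and> coprime (?T i) (p*q) \<and> g ^ \<rho>' mod (p * q) = (?T i) ^ ?e i mod (p*q)"
      if i: "i < length \<gamma>s" for i
    proof (intro conjI)
      show "(g ^ \<rho>' mod (p * q)) ^ (ds ! i) mod (p * q) < p * q" using pos by (intro mod_less_divisor) linarith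
    have "coprime (g ^ \<rho>' mod (p * q)) (p*q)" 
        using gc pos coprime_mod_left_iff[of "p*q" "g ^ \<rho>'"] pp by (simp add: prime_gt_0_nat)
      hence "coprime ((g ^ \<rho>' mod (p * q)) ^ (ds ! i)) (p*q)" by simp
      thus "coprime ((g ^ \<rho>' mod (p * q)) ^ (ds ! i) mod (p * q)) (p*q)" 
        using pos coprime_mod_left_iff[of "p*q" "(g ^ \<rho>' mod (p * q)) ^ (ds ! i)"] pp by (simp add: prime_gt_0_nat)
      show "g ^ \<rho>' mod (p * q) = ((g ^ \<rho>' mod (p * q)) ^ (ds ! i) mod (p * q)) ^ ?e i mod (p*q)"
        using key[OF gc, of "?e i" "ds ! i" \<rho>'] dsc[OF i] epos[OF i] tot by simp
    qed
    show ?thesis unfolding Verify_def verify1_def using per by simp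
  qed
  thus ?thesis
    apply (intro exI[of _ ds])
    using dsc unfolding ds_def g_def \<phi>_def Let_def by simp
qed

end
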